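(* Fix $0<\lambda\le\Lambda$ and define for $X\in S^N$ the Pucci operators $\mathcal M^-(X)=\inf\{-\mathrm{tr}(MX):M\in S^N,\lambda I\le M\le\Lambda I\}$ and $\mathcal M^+(X)=\sup\{-\mathrm{tr}(MX):M\in S^N,\lambda I\le M\le\Lambda I\}$. Let $A$ be a metric space, $b:\mathbb{R}^N\times A\to\mathbb{R}^N$, $c:\mathbb{R}^N\times A\to\mathbb{R}$ continuous, satisfying: for every $R>0$ there is $K_R$ with $\sup_{|x|\le R,\alpha}(|b|+|c|)\le K_R$ and $|b(x,\alpha)-b(y,\alpha)|\le K_R|x-y|$ for $|x|,|y|\le R$; $c\ge0$ and $c$ is continuous in $x$ uniformly in $|x|\le R,\alpha\in A$. Set $H(x,t,p)=\inf_{\alpha}\{c(x,\alpha)t-b(x,\alpha)\cdot p\}$ and $\tilde H(x,t,p)=\sup_\alpha\{c(x,\alpha)t-b(x,\alpha)\cdot p\}$. Assume that for some $R_o>0$ $$\sup_{\alpha\in A}\big(b(x,\alpha)\cdot x-c(x,\alpha)|x|^2\log|x|\big)\le\lambda-(N-1)\Lambda\quad\text{for }|x|\ge R_o.$$ (a) If $u\in USC(\mathbb{R}^N)$ is a viscosity subsolution of $\mathcal M^-(D^2u)+H(x,u,Du)=0$ in $\mathbb{R}^N$ with $\limsup_{|x|\to\infty}u(x)/\log|x|\le0$, and either $c\equiv0$ or $u\ge0$, then $u$ is constant. (b) If $v\in LSC(\mathbb{R}^N)$ is a viscosity supersolution of $\mathcal M^+(D^2v)+\tilde H(x,v,Dv)=0$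 in $\mathbb{R}^N$ with $\liminf_{|x|\to\infty}v(x)/\log|x|\ge0$, and either $c\equiv0$ or $v\le0$, then $v$ is constant.
   Context: $S^N$ is the space of real symmetric $N\times N$ matrices. *)

theory Defs
  imports "HOL-Analysis.Analysis" "HOL-Library.Liminf_Limsup"
begin

definition usc :: "('a::topological_space \<Rightarrow> real) \<Rightarrow> bool" where
  "usc u \<longleftrightarrow> (\<forall>a. open {x. u x < a})"

definition lsc :: "('a::topological_space \<Rightarrow> real) \<Rightarrow> bool" where
  "lsc u \<longleftrightarrow> (\<forall>a. open {x. u x > a})"

definition mat_le :: "real^'n^'n \<Rightarrow> real^'n^'n \<Rightarrow> bool" where
  "mat_le A B \<longleftrightarrow> (\<forall>\<xi>. \<xi> \<bullet> (A *v \<xi>) \<le> \<xi> \<bullet> (B *v \<xi>))"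

definition pucci_set :: "real \<Rightarrow> real \<Rightarrow> (real^'n^'n) set" where
  "pucci_set lam Lam = {M. transpose M = M \<and> mat_le (mat lam) M \<and> mat_le M (mat Lam)}"

definition pucci_minus :: "real \<Rightarrow> real \<Rightarrow> real^'n^'n \<Rightarrow> real" where
  "pucci_minus lam Lam X = (INF M\<in>pucci_set lam Lam. - trace (M ** X))"

definition pucci_plus :: "real \<Rightarrow> real \<Rightarrow> real^'n^'n \<Rightarrow> real" where
  "pucci_plus lam Lam X = (SUP M\<in>pucci_set lam Lam. - trace (M ** X))"

definition C2_with :: "(real^'n \<Rightarrow> real) \<Rightarrow> (real^'n \<Rightarrow> real^'n) \<Rightarrow> (real^'n \<Rightarrow> real^'n^'n) \<Rightarrow> bool" where
  "C2_with phi Dphi D2phi \<longleftrightarrow>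
     (\<forall>x. (phi has_derivative (\<lambda>h. Dphi x \<bullet> h)) (at x)) \<and>
     (\<forall>x. (Dphi has_derivative (\<lambda>h. D2phi x *v h)) (at x)) \<and>
     continuous_on UNIV D2phi"

definition visc_subsolution ::
  "(real^'n \<Rightarrow> real \<Rightarrow> real^'n \<Rightarrow> real^'n^'n \<Rightarrow> real) \<Rightarrow> (real^'n \<Rightarrow> real) \<Rightarrow> bool" where
  "visc_subsolution F u \<longleftrightarrow> usc u \<and>
     (\<forall>phi Dphi D2phi x0. C2_with phi Dphi D2phi \<and>
        (\<exists>r>0. \<forall>y\<in>ball x0 r. u y - phi y \<le> u x0 - phi x0) \<longrightarrow>
        F x0 (u x0) (Dphi x0) (D2phi x0) \<le> 0)"

definition visc_supersolution ::
  "(real^'n \<Rightarrow> real \<Rightarrow> real^'n \<Rightarrow> real^'n^'n \<Rightarrow> real) \<Rightarrow> (real^'n \<Rightarrow> real) \<Rightarrow> bool" where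
  "visc_supersolution F v \<longleftrightarrow> lsc v \<and>
     (\<forall>phi Dphi D2phi x0. C2_with phi Dphi D2phi \<and>
        (\<exists>r>0. \<forall>y\<in>ball x0 r. v y - phi y \<ge> v x0 - phi x0) \<longrightarrow>
        F x0 (v x0) (Dphi x0) (D2phi x0) \<ge> 0)"

end

theory Submission
  imports Defs
begin

definition outer :: "real^'n \<Rightarrow> real^'n^'n" where
  "outer v = (\<chi> i j. v$i * v$j)"

lemma mat_mult_vec: "(mat c :: real^'n^'n) *v x = c *\<^sub>R x"
  by (simp add: vec_eq_iff matrix_vector_mult_def mat_def if_distrib[of "\<lambda>z. z * _"] cong: if_cong)

lemma outer_mult_vec: "outer v *v h = (v \<bullet> h) *\<^sub>R v"
  by (simp add: vec_eq_iff matrix_vector_mult_def outer_def inner_vec_def sum_distrib_left sum_distrib_right mult.assoc mult.commute mult.left_commute)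

lemma trace_outer: "trace (M ** outer v) = v \<bullet> (M *v v)"
  by (simp add: trace_def matrix_matrix_mult_def outer_def inner_vec_def matrix_vector_mult_def
      sum_distrib_left mult.assoc mult.commute mult.left_commute)

lemma trace_mat: "trace (M ** (mat c :: real^'n^'n)) = c * trace M"
  by (simp add: trace_def matrix_matrix_mult_def mat_def sum_distrib_left if_distrib sum.delta mult.commute cong: if_cong)

lemma trace_scaleR: "trace (M ** (c *\<^sub>R (A::real^'n^'n))) = c * trace (M ** A)"
  by (simp add: trace_def matrix_matrix_mult_def sum_distrib_left mult.commute mult.left_commute)

lemma trace_plus: "trace (M ** ((A::real^'n^'n) + B)) = trace (M ** A) + trace (M ** B)"
  by (simp add: matrix_add_ldistrib trace_add)

lemma diag_axis: "M$i$i = axis i 1 \<bullet> ((M::real^'n^'n) *v axis i 1)"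
  by (simp add: inner_vec_def matrix_vector_mult_def axis_def if_distribR if_distrib sum.delta cong: if_cong)

lemma mat_le_quad: "mat_le A (mat c) \<Longrightarrow> \<xi> \<bullet> (A *v \<xi>) \<le> c * (\<xi> \<bullet> \<xi>)"
  by (simp add: mat_le_def mat_mult_vec)

lemma mat_le_quad2: "mat_le (mat c) A \<Longrightarrow> c * (\<xi> \<bullet> \<xi>) \<le> \<xi> \<bullet> (A *v \<xi>)"
  by (simp add: mat_le_def mat_mult_vec)

lemma trace_le: assumes "mat_le (M::real^'n^'n) (mat c)" shows "trace M \<le> real CARD('n) * c"
proof -
  have "trace M = (\<Sum>i\<in>UNIV. axis i 1 \<bullet> (M *v axis i 1))" by (simp add: trace_def diag_axis[symmetric])
  also have "\<dots> \<le> (\<Sum>i\<in>(UNIV::'n set). c)"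
    apply (rule sum_mono) using mat_le_quad[OF assms, of "axis _ 1"] by (simp add: inner_axis_axis)
  finally show ?thesis by simp
qed

lemma col_sum: "(\<Sum>i\<in>UNIV. (x::real^'n)$i * (x \<bullet> (M *v axis i 1))) = x \<bullet> (M *v x)"
proof -
  have "(\<Sum>i\<in>UNIV. x$i * (x \<bullet> (M *v axis i 1))) = x \<bullet> (M *v (\<Sum>i\<in>UNIV. x$i *\<^sub>R axis i 1))"
    by (simp add: linear_sum[OF matrix_vector_mul_linear] inner_sum_right matrix_vector_mult_scaleR)
  then show ?thesis using basis_expansion[of x] by (simp add: scalar_mult_eq_scaleR)
qed

lemma trace_perp:
  fixes M :: "real^'n^'n" and x :: "real^'n"
  assumes le: "mat_le M (mat L)" and s: "s = x \<bullet> x" and spos: "0 < s"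
  shows "s * trace M \<le> (real CARD('n) - 1) * L * s + x \<bullet> (M *v x)"
proof -
  define w where "w i = s *\<^sub>R axis i 1 - x$i *\<^sub>R x" for i
  have ww: "w i \<bullet> w i = s * s - 2 * s * (x$i) * (x$i) + (x$i) * (x$i) * s" for i
    by (simp add: w_def algebra_simps inner_axis inner_axis' inner_axis_axis s inner_commute)
  have wm: "w i \<bullet> (M *v w i) = s * s * M$i$i - s * x$i * (M *v x)$i
          - s * x$i * (x \<bullet> (M *v axis i 1)) + x$i * x$i * (x \<bullet> (M *v x))" for i
    by (simp add: w_def algebra_simps inner_axis inner_axis' diag_axis)
  have sx: "(\<Sum>i\<in>UNIV. x$i * x$i) = s" by (simp add: s inner_vec_def)
  have sxm: "(\<Sum>i\<in>UNIV. x$i * (M *v x)$i) = x \<bullet> (M *v x)" by (simp add: inner_vec_def)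
  have "(\<Sum>i\<in>UNIV. w i \<bullet> (M *v w i)) \<le> (\<Sum>i\<in>UNIV. L * (w i \<bullet> w i))"
    by (rule sum_mono) (rule mat_le_quad[OF le])
  moreover have "(\<Sum>i\<in>UNIV. w i \<bullet> (M *v w i)) = s * s * trace M - s * (x \<bullet> (M *v x))"
  proof -
    have "(\<Sum>i\<in>UNIV. w i \<bullet> (M *v w i)) = s * s * trace M - s * (\<Sum>i\<in>UNIV. x$i * (M *v x)$i)
       - s * (\<Sum>i\<in>UNIV. x$i * (x \<bullet> (M *v axis i 1))) + (\<Sum>i\<in>UNIV. x$i * x$i) * (x \<bullet> (M *v x))"
      by (simp add: wm sum.distrib sum_subtractf sum_distrib_left sum_distrib_right trace_def mult.assoc)
    then show ?thesis by (simp add: sxm col_sum sx)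
  qed
  moreover have "(\<Sum>i\<in>UNIV. L * (w i \<bullet> w i)) = L * (real CARD('n) - 1) * s * s"
  proof -
    have "(\<Sum>i\<in>UNIV. L * (w i \<bullet> w i)) = (\<Sum>i\<in>UNIV. L * (s * s) - L * s * (x$i * x$i))"
      by (rule sum.cong) (auto simp: ww algebra_simps)
    also have "\<dots> = L * (real CARD('n) * s * s - s * (\<Sum>i\<in>UNIV. x$i * x$i))"
      by (simp add: sum_subtractf sum_distrib_left algebra_simps)
    finally show ?thesis by (simp add: sx algebra_simps)
  qed
  ultimately have "s * (s * trace M) \<le> s * ((real CARD('n) - 1) * L * s + x \<bullet> (M *v x))"
    by (simp add: algebra_simps)
  then show ?thesis using spos by simp
qed

lemma q_deriv: "((\<lambda>x. (x-p)\<bullet>(x-p)) has_derivative (\<lambda>h. 2 * ((x-p) \<bullet> h))) (at x)"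
  for p x :: "real^'n"
  by (auto intro!: derivative_eq_intros simp: inner_commute)

lemma radial_C2:
  fixes p :: "real^'n" and G G1 G2 :: "real \<Rightarrow> real"
  assumes d1: "\<And>s. s \<ge> 0 \<Longrightarrow> (G has_real_derivative G1 s) (at s)"
    and d2: "\<And>s. s \<ge> 0 \<Longrightarrow> (G1 has_real_derivative G2 s) (at s)"
    and c2: "\<And>s. s \<ge> 0 \<Longrightarrow> isCont G2 s"
  shows "C2_with (\<lambda>x. G ((x-p)\<bullet>(x-p))) (\<lambda>x. (2 * G1 ((x-p)\<bullet>(x-p))) *\<^sub>R (x-p))
     (\<lambda>x. (2 * G1 ((x-p)\<bullet>(x-p))) *\<^sub>R mat 1 + (4 * G2 ((x-p)\<bullet>(x-p))) *\<^sub>R outer (x-p))"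
  unfolding C2_with_def
proof (intro conjI allI)
  fix x :: "real^'n"
  let ?s = "(x-p)\<bullet>(x-p)"
  have s0: "?s \<ge> 0" by simp
  have g: "(G has_derivative ((*) (G1 ?s))) (at ?s)"
    using d1[OF s0] by (simp add: has_field_derivative_def)
  have "((\<lambda>x. G ((x-p)\<bullet>(x-p))) has_derivative (((*) (G1 ?s)) \<circ> (\<lambda>h. 2 * ((x-p) \<bullet> h)))) (at x)"
    using diff_chain_at[OF q_deriv g] by (simp add: o_def)
  then show "((\<lambda>x. G ((x-p)\<bullet>(x-p))) has_derivative (\<lambda>h. ((2 * G1 ?s) *\<^sub>R (x-p)) \<bullet> h)) (at x)"
    by (simp add: o_def algebra_simps)
  have g1: "(G1 has_derivative ((*) (G2 ?s))) (at ?s)"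
    using d2[OF s0] by (simp add: has_field_derivative_def)
  have a: "((\<lambda>x. G1 ((x-p)\<bullet>(x-p))) has_derivative (((*) (G2 ?s)) \<circ> (\<lambda>h. 2 * ((x-p) \<bullet> h)))) (at x)"
    using diff_chain_at[OF q_deriv g1] by (simp add: o_def)
  have b: "((\<lambda>x. (2 * G1 ((x-p)\<bullet>(x-p))) *\<^sub>R (x-p)) has_derivative
      (\<lambda>h. (2 * G1 ?s) *\<^sub>R h + (2 * ((2 * ((x-p) \<bullet> h)) * G2 ?s)) *\<^sub>R (x-p))) (at x)"
    using a by (auto intro!: derivative_eq_intros simp: o_def)
  show "((\<lambda>x. (2 * G1 ((x-p)\<bullet>(x-p))) *\<^sub>R (x-p)) has_derivative
      (\<lambda>h. ((2 * G1 ?s) *\<^sub>R mat 1 + (4 * G2 ?s) *\<^sub>R outer (x-p)) *v h)) (at x)"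
    by (rule has_derivative_eq_rhs[OF b])
      (auto simp: fun_eq_iff matrix_vector_mult_add_rdistrib scaleR_matrix_vector_assoc[symmetric] outer_mult_vec algebra_simps)
next
  have cG1: "continuous_on UNIV (\<lambda>x::real^'n. G1 ((x-p)\<bullet>(x-p)))"
  proof (rule continuous_at_imp_continuous_on, intro ballI)
    fix x :: "real^'n"
    show "isCont (\<lambda>x. G1 ((x-p)\<bullet>(x-p))) x"
      by (rule isCont_o2[OF _ DERIV_isCont[OF d2]]) (auto intro!: continuous_intros)
  qed
  have cG2: "continuous_on UNIV (\<lambda>x::real^'n. G2 ((x-p)\<bullet>(x-p)))"
  proof (rule continuous_at_imp_continuous_on, intro ballI)
    fix x :: "real^'n"
    show "isCont (\<lambda>x. G2 ((x-p)\<bullet>(x-p))) x"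
      by (rule isCont_o2[OF _ c2]) (auto intro!: continuous_intros)
  qed
  have co: "continuous_on UNIV (\<lambda>x::real^'n. outer (x-p))"
    unfolding outer_def by (intro continuous_on_vec_lambda continuous_intros)
  show "continuous_on UNIV (\<lambda>x. (2 * G1 ((x-p)\<bullet>(x-p))) *\<^sub>R mat 1 + (4 * G2 ((x-p)\<bullet>(x-p))) *\<^sub>R outer (x-p))"
    by (intro continuous_intros cG1 cG2 co)
qed

lemma pucci_nonempty: "0 < lam \<Longrightarrow> lam \<le> Lam \<Longrightarrow> mat lam \<in> pucci_set lam Lam"
  by (auto simp: pucci_set_def mat_le_def mat_mult_vec transpose_mat intro!: mult_right_mono)

lemma pucci_minus_lb:
  assumes "0 < lam" "lam \<le> Lam" "\<And>M. M \<in> pucci_set lam Lam \<Longrightarrow> A \<le> - trace (M ** X)"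
  shows "A \<le> pucci_minus lam Lam X"
  unfolding pucci_minus_def using pucci_nonempty[OF assms(1,2)] assms(3)
  by (intro cINF_greatest) auto

lemma INF_lb: "(\<And>\<alpha>. B \<le> f \<alpha>) \<Longrightarrow> B \<le> (INF \<alpha>. f \<alpha> :: real)"
  by (intro cINF_greatest) auto

lemma trace_radial: "trace ((M::real^'n^'n) ** ((g1 *\<^sub>R mat 1 + g2 *\<^sub>R outer v) :: real^'n^'n)) = g1 * trace M + g2 * (v \<bullet> (M *v v))"
  by (simp add: trace_plus trace_scaleR trace_outer trace_mat)

lemma pucci_bound_log:
  fixes v :: "real^'n"
  assumes lam: "0 < lam" "lam \<le> Lam" and s: "s = v \<bullet> v" "0 < s"
    and g1: "0 < g1" and k: "2 * g1 + 4 * s * g2 \<le> 0"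
  shows "- 2 * g1 * (real CARD('n) - 1) * Lam - lam * (2 * g1 + 4 * s * g2)
          \<le> pucci_minus lam Lam ((2 * g1) *\<^sub>R mat 1 + (4 * g2) *\<^sub>R outer v)"
proof (rule pucci_minus_lb[OF lam])
  fix M :: "real^'n^'n" assume "M \<in> pucci_set lam Lam"
  then have le1: "mat_le M (mat Lam)" and le2: "mat_le (mat lam) M" by (auto simp: pucci_set_def)
  have tp: "s * trace M \<le> (real CARD('n) - 1) * Lam * s + v \<bullet> (M *v v)"
    by (rule trace_perp[OF le1 s])
  have q: "lam * s \<le> v \<bullet> (M *v v)" using mat_le_quad2[OF le2, of v] s by simp
  have "s * trace (M ** ((2 * g1) *\<^sub>R mat 1 + (4 * g2) *\<^sub>R outer v))
      = 2 * g1 * (s * trace M) + 4 * s * g2 * (v \<bullet> (M *v v))"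
    by (simp add: trace_radial algebra_simps)
  also have "\<dots> \<le> 2 * g1 * ((real CARD('n) - 1) * Lam * s + v \<bullet> (M *v v)) + 4 * s * g2 * (v \<bullet> (M *v v))"
    using tp g1 by simp
  also have "\<dots> = 2 * g1 * (real CARD('n) - 1) * Lam * s + (2 * g1 + 4 * s * g2) * (v \<bullet> (M *v v))"
    by (simp add: algebra_simps)
  also have "\<dots> \<le> 2 * g1 * (real CARD('n) - 1) * Lam * s + (2 * g1 + 4 * s * g2) * (lam * s)"
    using q k by (simp add: mult_left_mono_neg)
  finally have "s * trace (M ** ((2 * g1) *\<^sub>R mat 1 + (4 * g2) *\<^sub>R outer v))
       \<le> s * (2 * g1 * (real CARD('n) - 1) * Lam + lam * (2 * g1 + 4 * s * g2))"
    by (simp add: algebra_simps)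
  then show "- 2 * g1 * (real CARD('n) - 1) * Lam - lam * (2 * g1 + 4 * s * g2)
          \<le> - trace (M ** ((2 * g1) *\<^sub>R mat 1 + (4 * g2) *\<^sub>R outer v))"
    using s(2) by simp
qed

lemma pucci_bound_exp:
  fixes v :: "real^'n"
  assumes lam: "0 < lam" "lam \<le> Lam" and s: "s = v \<bullet> v"
    and g1: "0 \<le> g1" and g2: "g2 \<le> 0"
  shows "- 2 * g1 * real CARD('n) * Lam - 4 * g2 * lam * s
          \<le> pucci_minus lam Lam ((2 * g1) *\<^sub>R mat 1 + (4 * g2) *\<^sub>R outer v)"
proof (rule pucci_minus_lb[OF lam])
  fix M :: "real^'n^'n" assume "M \<in> pucci_set lam Lam"
  then have le1: "mat_le M (mat Lam)" and le2: "mat_le (mat lam) M" by (auto simp: pucci_set_def)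
  have t: "trace M \<le> real CARD('n) * Lam" by (rule trace_le[OF le1])
  have q: "lam * s \<le> v \<bullet> (M *v v)" using mat_le_quad2[OF le2, of v] s by simp
  have "trace (M ** ((2 * g1) *\<^sub>R mat 1 + (4 * g2) *\<^sub>R outer v))
      = 2 * g1 * trace M + 4 * g2 * (v \<bullet> (M *v v))"
    by (simp add: trace_radial)
  also have "\<dots> \<le> 2 * g1 * (real CARD('n) * Lam) + 4 * g2 * (lam * s)"
    using t q g1 g2 by (intro add_mono mult_left_mono mult_left_mono_neg) auto
  finally show "- 2 * g1 * real CARD('n) * Lam - 4 * g2 * lam * s
          \<le> - trace (M ** ((2 * g1) *\<^sub>R mat 1 + (4 * g2) *\<^sub>R outer v))"
    by (simp add: algebra_simps)
qed

lemma usc_diff: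
  assumes "usc u" "continuous_on UNIV \<phi>"
  shows "usc (\<lambda>x. u x - \<phi> x)"
  unfolding usc_def
proof
  fix a
  have "{x. u x - \<phi> x < a} = (\<Union>q. {x. u x < q} \<inter> {x. q - a < \<phi> x})"
  proof (intro set_eqI iffI)
    fix x assume "x \<in> {x. u x - \<phi> x < a}"
    then have "x \<in> {x. u x < (u x + (\<phi> x + a)) / 2} \<inter> {x. (u x + (\<phi> x + a)) / 2 - a < \<phi> x}" by (auto simp: field_simps)
    then show "x \<in> (\<Union>q. {x. u x < q} \<inter> {x. q - a < \<phi> x})" by blast
  qed auto
  moreover have "open ({x. u x < q} \<inter> {x. q - a < \<phi> x})" for q
    using assms unfolding usc_def
    by (intro open_Int) (auto intro!: open_Collect_less continuous_intros simp: continuous_on_eq_continuous_at)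
  ultimately show "open {x. u x - \<phi> x < a}" by auto
qed

lemma usc_max:
  fixes f :: "'a::topological_space \<Rightarrow> real"
  assumes "usc f" "compact K" "K \<noteq> {}"
  shows "\<exists>x\<in>K. \<forall>y\<in>K. f y \<le> f x"
proof (rule ccontr)
  assume "\<not> ?thesis"
  then have h: "\<forall>x\<in>K. \<exists>y\<in>K. f x < f y" by (auto simp: not_le)
  have "K \<subseteq> (\<Union>y\<in>K. {x. f x < f y})" using h by auto
  moreover have "\<forall>y\<in>K. open {x. f x < f y}" using assms(1) by (auto simp: usc_def)
  ultimately obtain T where T: "T \<subseteq> K" "finite T" "K \<subseteq> (\<Union>y\<in>T. {x. f x < f y})"
    using compactE_image[OF assms(2)] by metis
  then have "T \<noteq> {}" using assms(3) by auto
  have fin: "finite (f ` T)" using \<open>finite T\<close> by simp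
  have "Max (f ` T) \<in> f ` T" using fin \<open>T \<noteq> {}\<close> by (intro Max_in) auto
  then obtain t where t0: "t \<in> T" "f t = Max (f ` T)" by auto
  have t: "t \<in> T" "\<forall>y\<in>T. f y \<le> f t"
    using t0 Max_ge[OF fin] by auto
  then obtain y where "y \<in> T" "f t < f y" using T by blast
  with t show False by fastforce
qed

definition glog :: "real \<Rightarrow> real \<Rightarrow> real \<Rightarrow> real" where
  "glog a \<epsilon> s = a + 4 * \<epsilon> + \<epsilon> * (ln (1 + s) / 2 - 2 / (1 + s))"
definition g1log :: "real \<Rightarrow> real \<Rightarrow> real" where
  "g1log \<epsilon> s = \<epsilon> * (1 / (2 * (1 + s)) + 2 / (1 + s)^2)"
definition g2log :: "real \<Rightarrow> real \<Rightarrow> real" where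
  "g2log \<epsilon> s = \<epsilon> * (- 1 / (2 * (1 + s)^2) - 4 / (1 + s)^3)"

lemma glog_deriv: "s \<ge> 0 \<Longrightarrow> (glog a \<epsilon> has_real_derivative g1log \<epsilon> s) (at s)"
  unfolding glog_def[abs_def] g1log_def
  apply (rule derivative_eq_intros refl | simp)+
  apply (simp add: divide_simps)
  apply algebra
  done

lemma g1log_deriv: "s \<ge> 0 \<Longrightarrow> (g1log \<epsilon> has_real_derivative g2log \<epsilon> s) (at s)"
  unfolding g1log_def[abs_def] g2log_def
  apply (rule derivative_eq_intros refl | simp)+
  apply (simp add: divide_simps)
  apply (rule disjI2) apply algebra
  done

lemma g2log_cont: "s \<ge> 0 \<Longrightarrow> isCont (g2log \<epsilon>) s"
  unfolding g2log_def[abs_def] by (intro continuous_intros) auto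

lemma g1log_pos: "0 < \<epsilon> \<Longrightarrow> 0 \<le> s \<Longrightarrow> 0 < g1log \<epsilon> s"
  unfolding g1log_def by (intro mult_pos_pos add_pos_pos) auto

lemma g2log_neg: "0 < \<epsilon> \<Longrightarrow> 0 \<le> s \<Longrightarrow> g2log \<epsilon> s < 0"
proof -
  assume a: "0 < \<epsilon>" "0 \<le> s"
  have "0 < 1 / (2 * (1 + s)^2)" "0 < 4 / (1 + s)^3" using a by auto
  moreover have "- 1 / (2 * (1 + s)^2) = - (1 / (2 * (1 + s)^2))" by simp
  ultimately have "- 1 / (2 * (1 + s)^2) - 4 / (1 + s)^3 < 0" by linarith
  then show ?thesis unfolding g2log_def using a by (simp add: mult_pos_neg)
qed

lemma g12_neg: assumes "0 < \<epsilon>" "2 \<le> s" shows "g1log \<epsilon> s + s * g2log \<epsilon> s < 0"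
proof -
  have "g1log \<epsilon> s + s * g2log \<epsilon> s = \<epsilon> * (5 - 3 * s) / (2 * (1 + s)^3)"
    using assms unfolding g1log_def g2log_def by (simp add: divide_simps) algebra
  moreover have "\<epsilon> * (5 - 3 * s) < 0" using assms by (intro mult_pos_neg) auto
  ultimately show ?thesis using assms by (simp add: divide_neg_pos)
qed

lemma glog_lower: assumes "0 < \<epsilon>" "0 \<le> s" shows "a + 2 * \<epsilon> \<le> glog a \<epsilon> s"
proof -
  have "ln (1 + s) \<ge> 0" using assms by simp
  moreover have "2 / (1 + s) \<le> 2" using assms by (simp add: field_simps)
  ultimately have "-2 \<le> ln (1 + s) / 2 - 2 / (1 + s)" by simp
  then have "\<epsilon> * (-2) \<le> \<epsilon> * (ln (1 + s) / 2 - 2 / (1 + s))" using assms by (intro mult_left_mono) auto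
  then show ?thesis unfolding glog_def by simp
qed

lemma glog_lower2: assumes "0 < \<epsilon>" "0 < r" shows "a + 2 * \<epsilon> + \<epsilon> * ln r \<le> glog a \<epsilon> (r^2)"
proof -
  have "ln (r^2) \<le> ln (1 + r^2)" using assms by (subst ln_le_cancel_iff) (auto simp: add_pos_nonneg)
  then have "ln r \<le> ln (1 + r^2) / 2" using assms by (simp add: ln_realpow)
  moreover have "2 / (1 + r^2) \<le> 2" by (simp add: field_simps add_pos_nonneg)
  ultimately have "ln r - 2 \<le> ln (1 + r^2) / 2 - 2 / (1 + r^2)" by simp
  then have "\<epsilon> * (ln r - 2) \<le> \<epsilon> * (ln (1 + r^2) / 2 - 2 / (1 + r^2))" using assms by (intro mult_left_mono) auto
  moreover have "\<epsilon> * (ln r - 2) = \<epsilon> * ln r - 2 * \<epsilon>" by (simp add: algebra_simps)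
  ultimately show ?thesis unfolding glog_def by linarith
qed

lemma glog_c: assumes "0 < \<epsilon>" "2 \<le> r" "0 \<le> a"
  shows "2 * (r^2) * g1log \<epsilon> (r^2) * ln r \<le> glog a \<epsilon> (r^2)"
proof -
  define s where "s = r^2"
  have s4: "4 \<le> s" using assms mult_mono[of 2 r 2 r] by (simp add: s_def power2_eq_square)
  have l0: "0 \<le> ln r" using assms by simp
  have lr: "ln r \<le> r" using ln_le_minus_one[of r] assms by simp
  have sq: "0 \<le> (r - 1)^2" by simp
  have "2 * r \<le> 1 + s" using sq unfolding s_def by (simp add: power2_eq_square algebra_simps)
  then have "2 * ln r \<le> 1 + s" using lr by linarith
  have m: "s * (2 * ln r) \<le> (1 + s) * (1 + s)"
    using \<open>2 * ln r \<le> 1 + s\<close> s4 l0 by (intro mult_mono) auto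
  have A: "4 * s / (1 + s)^2 * ln r \<le> 2"
  proof -
    have "4 * s / (1 + s)^2 * ln r = (2 * (s * (2 * ln r))) / (1 + s)^2" by simp
    also have "\<dots> \<le> 2" using m s4 by (subst pos_divide_le_eq) (auto simp: power2_eq_square)
    finally show ?thesis .
  qed
  have B: "s / (1 + s) * ln r \<le> ln r" using l0 s4 by (intro mult_left_le_one_le) auto
  have "2 * s * g1log \<epsilon> s * ln r = \<epsilon> * (s / (1 + s) * ln r + 4 * s / (1 + s)^2 * ln r)"
    unfolding g1log_def using s4 by (simp add: divide_simps) algebra
  also have "\<dots> \<le> \<epsilon> * (ln r + 2)" using A B assms(1) by (intro mult_left_mono) simp_all
  also have "\<dots> \<le> a + 2 * \<epsilon> + \<epsilon> * ln r" using assms by (simp add: algebra_simps)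
  also have "\<dots> \<le> glog a \<epsilon> s" unfolding s_def by (rule glog_lower2) (use assms in auto)
  finally show ?thesis unfolding s_def .
qed

lemma C2_cont: "C2_with phi Dphi D2phi \<Longrightarrow> continuous_on UNIV phi"
  unfolding C2_with_def
  by (metis continuous_at_imp_continuous_on has_derivative_continuous)

lemma F_lb:
  assumes lam: "0 < lam" "lam \<le> Lam" and P: "P \<le> pucci_minus lam Lam X"
    and H: "\<And>\<alpha>. B \<le> c x \<alpha> * t - b x \<alpha> \<bullet> p"
  shows "P + B \<le> pucci_minus lam Lam X + (INF \<alpha>. c x \<alpha> * t - b x \<alpha> \<bullet> p)"
  using P INF_lb[of B "\<lambda>\<alpha>. c x \<alpha> * t - b x \<alpha> \<bullet> p", OF H] by linarith

lemma exterior: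
  fixes u :: "real^'n \<Rightarrow> real" and b :: "real^'n \<Rightarrow> 'a \<Rightarrow> real^'n" and c :: "real^'n \<Rightarrow> 'a \<Rightarrow> real"
  assumes lam: "0 < lam" "lam \<le> Lam"
    and sub: "visc_subsolution (\<lambda>x t p X. pucci_minus lam Lam X + (INF \<alpha>. c x \<alpha> * t - b x \<alpha> \<bullet> p)) u"
    and lim: "\<And>\<epsilon>. \<epsilon> > 0 \<Longrightarrow> \<exists>R. \<forall>x. norm x \<ge> R \<longrightarrow> u x \<le> \<epsilon> * ln (norm x)"
    and gr: "\<And>x \<alpha>. norm x \<ge> r0 \<Longrightarrow> b x \<alpha> \<bullet> x \<le> (lam - (real CARD('n) - 1) * Lam) + c x \<alpha> * (norm x)^2 * ln (norm x)"
    and cnn: "\<And>x \<alpha>. 0 \<le> c x \<alpha>"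
    and cases: "(\<forall>x \<alpha>. c x \<alpha> = 0) \<or> (\<forall>x. 0 \<le> u x)"
    and r0: "2 \<le> r0"
    and ain: "\<And>y. norm y \<le> r0 \<Longrightarrow> u y \<le> a"
    and a0: "(\<forall>x. 0 \<le> u x) \<Longrightarrow> 0 \<le> a"
  shows "u x \<le> a"
proof (cases "norm x \<le> r0")
  case True then show ?thesis using ain by auto
next
  case False
  then have xr0: "r0 < norm x" by simp
  define L where "L = lam - (real CARD('n) - 1) * Lam"
  have main: "u x \<le> glog a \<epsilon> (x \<bullet> x)" if ep: "0 < \<epsilon>" for \<epsilon>
  proof (rule ccontr)
    assume "\<not> ?thesis"
    then have ux: "glog a \<epsilon> (x \<bullet> x) < u x" by simp
    define \<phi> where "\<phi> y = glog a \<epsilon> (y \<bullet> y)" for y :: "real^'n"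
    define D\<phi> where "D\<phi> y = (2 * g1log \<epsilon> (y \<bullet> y)) *\<^sub>R y" for y :: "real^'n"
    define D2\<phi> where "D2\<phi> y = (2 * g1log \<epsilon> (y \<bullet> y)) *\<^sub>R mat 1 + (4 * g2log \<epsilon> (y \<bullet> y)) *\<^sub>R outer y" for y :: "real^'n"
    have C2: "C2_with \<phi> D\<phi> D2\<phi>"
      using radial_C2[of "glog a \<epsilon>" "g1log \<epsilon>" "g2log \<epsilon>" 0] glog_deriv g1log_deriv g2log_cont
      unfolding \<phi>_def[abs_def] D\<phi>_def[abs_def] D2\<phi>_def[abs_def] by simp
    have phinorm: "\<phi> y = glog a \<epsilon> ((norm y)^2)" for y by (simp add: \<phi>_def power2_norm_eq_inner)
    obtain R1 where R1: "\<And>y. norm y \<ge> R1 \<Longrightarrow> u y \<le> (\<epsilon>/2) * ln (norm y)"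
      using lim[of "\<epsilon>/2"] ep by auto
    define R where "R = max (max R1 (exp (2 * \<bar>a\<bar> / \<epsilon>))) (norm x + 1)"
    have far: "u y - \<phi> y < 0" if yR: "R \<le> norm y" for y
    proof -
      have "norm x + 1 \<le> R" unfolding R_def by simp
      then have ny: "0 < norm y" using yR norm_ge_zero[of x] by linarith
      have "u y \<le> (\<epsilon>/2) * ln (norm y)" using R1 yR unfolding R_def by auto
      moreover have "a + 2 * \<epsilon> + \<epsilon> * ln (norm y) \<le> \<phi> y"
        using glog_lower2[OF ep ny] phinorm by simp
      moreover have "2 * \<bar>a\<bar> / \<epsilon> \<le> ln (norm y)"
      proof -
        have "exp (2 * \<bar>a\<bar> / \<epsilon>) \<le> norm y" using yR unfolding R_def by auto
        then have "ln (exp (2 * \<bar>a\<bar> / \<epsilon>)) \<le> ln (norm y)" using ny by (subst ln_le_cancel_iff) auto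
        then show ?thesis by simp
      qed
      then have "(\<epsilon>/2) * (2 * \<bar>a\<bar> / \<epsilon>) \<le> (\<epsilon>/2) * ln (norm y)" using ep by (intro mult_left_mono) auto
      then have "\<bar>a\<bar> \<le> (\<epsilon>/2) * ln (norm y)" using ep by simp
      ultimately show ?thesis using ep by linarith
    qed
    define Ann where "Ann = cball (0::real^'n) R \<inter> {y. r0 \<le> norm y}"
    have cAnn: "compact Ann" unfolding Ann_def
      by (intro compact_Int_closed compact_cball closed_Collect_le continuous_intros)
    have xAnn: "x \<in> Ann" using xr0 unfolding Ann_def R_def by auto
    have usc_w: "usc (\<lambda>y. u y - \<phi> y)"
      using usc_diff sub C2_cont[OF C2] unfolding visc_subsolution_def by blast
    obtain x0 where x0: "x0 \<in> Ann" "\<And>y. y \<in> Ann \<Longrightarrow> u y - \<phi> y \<le> u x0 - \<phi> x0"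
      using usc_max[OF usc_w cAnn] xAnn by blast
    have wpos: "0 < u x0 - \<phi> x0" using x0(2)[OF xAnn] ux unfolding \<phi>_def by simp
    have nx0: "r0 < norm x0"
    proof (rule ccontr)
      assume "\<not> r0 < norm x0"
      then have "u x0 \<le> a" using ain by simp
      moreover have "a + 2 * \<epsilon> \<le> \<phi> x0" unfolding \<phi>_def by (rule glog_lower[OF ep]) simp
      ultimately show False using wpos ep by linarith
    qed
    have loc: "\<forall>y\<in>ball x0 (norm x0 - r0). u y - \<phi> y \<le> u x0 - \<phi> x0"
    proof
      fix y assume "y \<in> ball x0 (norm x0 - r0)"
      then have "dist x0 y < norm x0 - r0" by simp
      moreover have "norm x0 \<le> norm y + dist x0 y" using norm_triangle_sub[of x0 y] by (simp add: dist_norm)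
      ultimately have yr0: "r0 < norm y" by simp
      show "u y - \<phi> y \<le> u x0 - \<phi> x0"
      proof (cases "norm y \<le> R")
        case True then have "y \<in> Ann" using yr0 unfolding Ann_def by auto
        then show ?thesis using x0(2) by blast
      next
        case False then show ?thesis using far[of y] wpos by simp
      qed
    qed
    have test: "pucci_minus lam Lam (D2\<phi> x0) + (INF \<alpha>. c x0 \<alpha> * u x0 - b x0 \<alpha> \<bullet> D\<phi> x0) \<le> 0"
    proof -
      have "\<exists>r>0. \<forall>y\<in>ball x0 r. u y - \<phi> y \<le> u x0 - \<phi> x0"
        using loc nx0 by (intro exI[of _ "norm x0 - r0"]) auto
      then show ?thesis using sub C2 unfolding visc_subsolution_def by blast
    qed
    define s where "s = x0 \<bullet> x0"
    define r where "r = norm x0"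
    have sr: "s = r^2" unfolding s_def r_def by (simp add: power2_norm_eq_inner)
    have r2: "2 \<le> r" using nx0 r0 unfolding r_def by simp
    have s4: "4 \<le> s" using r2 mult_mono[of 2 r 2 r] unfolding sr by (simp add: power2_eq_square)
    define G1 where "G1 = g1log \<epsilon> s"
    define G2 where "G2 = g2log \<epsilon> s"
    have G1p: "0 < G1" unfolding G1_def using g1log_pos ep s4 by simp
    have G2n: "G2 < 0" unfolding G2_def using g2log_neg ep s4 by simp
    have G12: "G1 + s * G2 < 0" unfolding G1_def G2_def using g12_neg ep s4 by simp
    have sG2: "s * G2 < 0" using G2n s4 by (simp add: mult_pos_neg)
    have k: "2 * G1 + 4 * s * G2 \<le> 0" using G12 sG2 by linarith
    have P: "- 2 * G1 * (real CARD('n) - 1) * Lam - lam * (2 * G1 + 4 * s * G2) \<le> pucci_minus lam Lam (D2\<phi> x0)"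
      unfolding D2\<phi>_def G1_def[symmetric] G2_def[symmetric] s_def[symmetric]
      by (rule pucci_bound_log[OF lam s_def _ G1p k]) (use s4 in simp)
    have H: "- 2 * G1 * L \<le> c x0 \<alpha> * u x0 - b x0 \<alpha> \<bullet> D\<phi> x0" for \<alpha>
    proof -
      have bx: "b x0 \<alpha> \<bullet> x0 \<le> L + c x0 \<alpha> * r^2 * ln r" using gr[of x0 \<alpha>] nx0 unfolding L_def r_def by simp
      have cterm: "0 \<le> c x0 \<alpha> * (u x0 - 2 * r^2 * G1 * ln r)"
        using cases
      proof
        assume "\<forall>x \<alpha>. c x \<alpha> = 0" then show ?thesis by simp
      next
        assume u0: "\<forall>x. 0 \<le> u x"
        have "2 * r^2 * G1 * ln r \<le> \<phi> x0"
          using glog_c[OF ep r2 a0[OF u0]] unfolding G1_def sr phinorm r_def by simp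
        then show ?thesis using wpos cnn by simp
      qed
      have "b x0 \<alpha> \<bullet> D\<phi> x0 = 2 * G1 * (b x0 \<alpha> \<bullet> x0)" unfolding D\<phi>_def G1_def s_def by simp
      also have "\<dots> \<le> 2 * G1 * (L + c x0 \<alpha> * r^2 * ln r)" using bx G1p by simp
      finally show ?thesis using cterm by (simp add: algebra_simps)
    qed
    have "- 2 * G1 * (real CARD('n) - 1) * Lam - lam * (2 * G1 + 4 * s * G2) + - 2 * G1 * L
        \<le> pucci_minus lam Lam (D2\<phi> x0) + (INF \<alpha>. c x0 \<alpha> * u x0 - b x0 \<alpha> \<bullet> D\<phi> x0)"
      by (rule F_lb[where c=c and b=b and x=x0 and t="u x0" and p="D\<phi> x0", OF lam P H])
    moreover have "- 2 * G1 * (real CARD('n) - 1) * Lam - lam * (2 * G1 + 4 * s * G2) + - 2 * G1 * L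
        = - 4 * lam * (G1 + s * G2)" unfolding L_def by (simp add: algebra_simps)
    moreover have "0 < - 4 * lam * (G1 + s * G2)" using G12 lam by (simp add: mult_pos_neg)
    ultimately show False using test by linarith
  qed
  define C where "C = 4 + ln (1 + x \<bullet> x) / 2 - 2 / (1 + x \<bullet> x)"
  have gC: "glog a \<epsilon> (x \<bullet> x) = a + \<epsilon> * C" for \<epsilon> unfolding glog_def C_def by (simp add: algebra_simps)
  have Cpos: "0 < C"
  proof -
    have "0 \<le> ln (1 + x \<bullet> x)" by simp
    moreover have "2 / (1 + x \<bullet> x) \<le> 2" by (simp add: field_simps add_pos_nonneg)
    ultimately show ?thesis unfolding C_def by linarith
  qed
  show ?thesis
  proof (rule ccontr)
    assume "\<not> u x \<le> a"
    define \<epsilon> where "\<epsilon> = (u x - a) / (2 * C)"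
    have ep: "0 < \<epsilon>" using \<open>\<not> u x \<le> a\<close> Cpos unfolding \<epsilon>_def by simp
    have e: "\<epsilon> * C = (u x - a) / 2" unfolding \<epsilon>_def using Cpos by simp
    have "u x \<le> a + \<epsilon> * C" using main[OF ep] gC[of \<epsilon>] by simp
    then have "u x \<le> a + (u x - a) / 2" by (simp only: e)
    then show False using \<open>\<not> u x \<le> a\<close> by (simp add: field_simps)
  qed
qed

definition gexp :: "real \<Rightarrow> real \<Rightarrow> real \<Rightarrow> real \<Rightarrow> real \<Rightarrow> real" where
  "gexp m \<sigma> k \<rho> s = m + \<sigma> * exp (- k * \<rho>^2) - \<sigma> * exp (- k * s)"
definition g1exp :: "real \<Rightarrow> real \<Rightarrow> real \<Rightarrow> real" where
  "g1exp \<sigma> k s = \<sigma> * k * exp (- k * s)"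
definition g2exp :: "real \<Rightarrow> real \<Rightarrow> real \<Rightarrow> real" where
  "g2exp \<sigma> k s = - \<sigma> * k^2 * exp (- k * s)"

lemma gexp_deriv: "(gexp m \<sigma> k \<rho> has_real_derivative g1exp \<sigma> k s) (at s)"
  unfolding gexp_def[abs_def] g1exp_def
  by (rule derivative_eq_intros refl | simp)+

lemma g1exp_deriv: "(g1exp \<sigma> k has_real_derivative g2exp \<sigma> k s) (at s)"
  unfolding g1exp_def[abs_def] g2exp_def
  by (rule derivative_eq_intros refl | simp)+ (simp add: power2_eq_square)

lemma g2exp_cont: "isCont (g2exp \<sigma> k) s"
  unfolding g2exp_def[abs_def] by (intro continuous_intros)

lemma smp:
  fixes u :: "real^'n \<Rightarrow> real" and b :: "real^'n \<Rightarrow> 'a \<Rightarrow> real^'n" and c :: "real^'n \<Rightarrow> 'a \<Rightarrow> real"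
  assumes lam: "0 < lam" "lam \<le> Lam"
    and sub: "visc_subsolution (\<lambda>x t p X. pucci_minus lam Lam X + (INF \<alpha>. c x \<alpha> * t - b x \<alpha> \<bullet> p)) u"
    and bounds: "\<forall>R>0. \<exists>K. (\<forall>x \<alpha>. norm x \<le> R \<longrightarrow> norm (b x \<alpha>) + \<bar>c x \<alpha>\<bar> \<le> K) \<and>
                     (\<forall>x y \<alpha>. norm x \<le> R \<and> norm y \<le> R \<longrightarrow>
                          norm (b x \<alpha> - b y \<alpha>) \<le> K * norm (x - y))"
    and cnn: "\<And>x \<alpha>. 0 \<le> c x \<alpha>"
    and cases: "(\<forall>x \<alpha>. c x \<alpha> = 0) \<or> (\<forall>x. 0 \<le> u x)"
    and zmax: "\<And>y. u y \<le> u z"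
  shows "u y = u z"
proof (rule ccontr)
  assume "u y \<noteq> u z"
  then have up: "u y < u z" using zmax[of y] by simp
  define Mx where "Mx = u z"
  define p where "p = y"
  define Kset where "Kset = {x. Mx \<le> u x}"
  have uscu: "usc u" using sub unfolding visc_subsolution_def by simp
  have "- Kset = {x. u x < Mx}" unfolding Kset_def by auto
  then have "closed Kset" using uscu unfolding usc_def closed_def by simp
  moreover have "Kset \<noteq> {}" unfolding Kset_def Mx_def by auto
  ultimately obtain x1 where x1: "x1 \<in> Kset" "\<And>w. w \<in> Kset \<Longrightarrow> dist p x1 \<le> dist p w"
    using distance_attains_inf by blast
  define \<rho> where "\<rho> = dist p x1"
  have ux1: "u x1 = Mx" using x1(1) zmax[of x1] unfolding Kset_def Mx_def by simp
  have "p \<noteq> x1" using up ux1 unfolding p_def Mx_def by auto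
  then have rho: "0 < \<rho>" unfolding \<rho>_def by simp
  have inball: "u w < Mx" if "dist p w < \<rho>" for w
  proof (rule ccontr)
    assume "\<not> u w < Mx"
    then have "w \<in> Kset" unfolding Kset_def by simp
    then show False using x1(2)[of w] that unfolding \<rho>_def by simp
  qed
  define S where "S = sphere p (\<rho>/2)"
  have Sne: "S \<noteq> {}" unfolding S_def using rho sphere_eq_empty[of p "\<rho>/2"] by linarith
  have Sc: "compact S" unfolding S_def by (rule compact_sphere)
  obtain y1 where y1: "y1 \<in> S" "\<And>w. w \<in> S \<Longrightarrow> u w \<le> u y1"
    using usc_max[OF uscu Sc Sne] by blast
  have uy1: "u y1 < Mx" using y1(1) rho inball unfolding S_def by simp
  define \<sigma> where "\<sigma> = (Mx - u y1) / 2"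
  have sig: "0 < \<sigma>" unfolding \<sigma>_def using uy1 by simp
  define R where "R = norm p + \<rho>"
  have Rpos: "0 < R" unfolding R_def using rho norm_ge_zero[of p] by linarith
  obtain K0 where K0': "\<forall>x \<alpha>. norm x \<le> R \<longrightarrow> norm (b x \<alpha>) + \<bar>c x \<alpha>\<bar> \<le> K0"
    using bounds Rpos by blast
  then have K0: "\<And>x \<alpha>. norm x \<le> R \<Longrightarrow> norm (b x \<alpha>) + \<bar>c x \<alpha>\<bar> \<le> K0" by blast
  have "norm p \<le> R" unfolding R_def using rho by simp
  then have K0nn: "0 \<le> K0" using K0[of p undefined] norm_ge_zero[of "b p undefined"] abs_ge_zero[of "c p undefined"] by linarith
  define NL where "NL = real CARD('n) * Lam"
  define k where "k = 2 * (NL + K0 * \<rho> + 1) / (lam * \<rho>^2)"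
  have NLnn: "0 \<le> NL" unfolding NL_def using lam by simp
  have "0 \<le> K0 * \<rho>" using K0nn rho by simp
  then have kpos: "0 < k" unfolding k_def using NLnn rho lam by (intro divide_pos_pos) auto
  have krho: "k * lam * \<rho>^2 = 2 * (NL + K0 * \<rho> + 1)" unfolding k_def using lam rho by simp
  define \<phi> where "\<phi> w = gexp Mx \<sigma> k \<rho> ((w - p) \<bullet> (w - p))" for w :: "real^'n"
  define D\<phi> where "D\<phi> w = (2 * g1exp \<sigma> k ((w - p) \<bullet> (w - p))) *\<^sub>R (w - p)" for w :: "real^'n"
  define D2\<phi> where "D2\<phi> w = (2 * g1exp \<sigma> k ((w - p) \<bullet> (w - p))) *\<^sub>R mat 1
      + (4 * g2exp \<sigma> k ((w - p) \<bullet> (w - p))) *\<^sub>R outer (w - p)" for w :: "real^'n"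
  have C2: "C2_with \<phi> D\<phi> D2\<phi>"
    unfolding \<phi>_def[abs_def] D\<phi>_def[abs_def] D2\<phi>_def[abs_def]
    by (rule radial_C2) (auto intro: gexp_deriv g1exp_deriv g2exp_cont)
  have inn: "(w - p) \<bullet> (w - p) = (dist p w)^2" for w :: "real^'n"
    by (simp add: dist_norm power2_norm_eq_inner[symmetric] norm_minus_commute)
  have phi_ge: "Mx - \<sigma> \<le> \<phi> w" for w
  proof -
    have "exp (- k * ((w - p) \<bullet> (w - p))) \<le> 1" using kpos by (simp add: mult_nonneg_nonneg)
    then have "\<sigma> * exp (- k * ((w - p) \<bullet> (w - p))) \<le> \<sigma>" using sig by (simp add: mult_left_le)
    moreover have "0 \<le> \<sigma> * exp (- k * \<rho>^2)" using sig by simp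
    ultimately show ?thesis unfolding \<phi>_def gexp_def by linarith
  qed
  have phi_far: "Mx \<le> \<phi> w" if "\<rho> \<le> dist p w" for w
  proof -
    have "\<rho>^2 \<le> (dist p w)^2" using that rho by (intro power_mono) auto
    then have "- k * ((w - p) \<bullet> (w - p)) \<le> - k * \<rho>^2" unfolding inn using kpos by simp
    then have "exp (- k * ((w - p) \<bullet> (w - p))) \<le> exp (- k * \<rho>^2)" by simp
    then have "\<sigma> * exp (- k * ((w - p) \<bullet> (w - p))) \<le> \<sigma> * exp (- k * \<rho>^2)" using sig by simp
    then show ?thesis unfolding \<phi>_def gexp_def by linarith
  qed
  have phix1: "\<phi> x1 = Mx" unfolding \<phi>_def gexp_def inn \<rho>_def by simp
  define Ann where "Ann = cball p \<rho> \<inter> {w. \<rho>/2 \<le> dist p w}"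
  have cAnn: "compact Ann" unfolding Ann_def
    by (intro compact_Int_closed compact_cball closed_Collect_le continuous_intros)
  have x1Ann: "x1 \<in> Ann" unfolding Ann_def \<rho>_def using rho \<rho>_def by auto
  have usc_w: "usc (\<lambda>w. u w - \<phi> w)" using usc_diff uscu C2_cont[OF C2] by blast
  obtain x0 where x0: "x0 \<in> Ann" "\<And>w. w \<in> Ann \<Longrightarrow> u w - \<phi> w \<le> u x0 - \<phi> x0"
    using usc_max[OF usc_w cAnn] x1Ann by blast
  have w0: "0 \<le> u x0 - \<phi> x0" using x0(2)[OF x1Ann] ux1 phix1 by simp
  have dx0: "\<rho>/2 < dist p x0"
  proof (rule ccontr)
    assume "\<not> \<rho>/2 < dist p x0"
    then have "x0 \<in> S" using x0(1) unfolding Ann_def S_def by auto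
    then have "u x0 \<le> u y1" using y1(2) by simp
    moreover have "u y1 = Mx - 2 * \<sigma>" unfolding \<sigma>_def by (simp add: field_simps)
    ultimately show False using phi_ge[of x0] w0 sig by linarith
  qed
  have dx0': "dist p x0 \<le> \<rho>" using x0(1) unfolding Ann_def by auto
  have loc: "\<forall>w\<in>ball x0 (dist p x0 - \<rho>/2). u w - \<phi> w \<le> u x0 - \<phi> x0"
  proof
    fix w assume "w \<in> ball x0 (dist p x0 - \<rho>/2)"
    then have "dist x0 w < dist p x0 - \<rho>/2" by simp
    moreover have "dist p x0 \<le> dist p w + dist x0 w" using dist_triangle[of p x0 w] by (simp add: dist_commute)
    ultimately have wr: "\<rho>/2 < dist p w" by simp
    show "u w - \<phi> w \<le> u x0 - \<phi> x0"
    proof (cases "dist p w \<le> \<rho>")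
      case True then have "w \<in> Ann" using wr unfolding Ann_def by auto
      then show ?thesis using x0(2) by blast
    next
      case False then have "Mx \<le> \<phi> w" using phi_far by simp
      moreover have "u w \<le> Mx" using zmax unfolding Mx_def by simp
      ultimately show ?thesis using w0 by linarith
    qed
  qed
  have test: "pucci_minus lam Lam (D2\<phi> x0) + (INF \<alpha>. c x0 \<alpha> * u x0 - b x0 \<alpha> \<bullet> D\<phi> x0) \<le> 0"
  proof -
    have "\<exists>r>0. \<forall>w\<in>ball x0 r. u w - \<phi> w \<le> u x0 - \<phi> x0"
      using loc dx0 by (intro exI[of _ "dist p x0 - \<rho>/2"]) auto
    then show ?thesis using sub C2 unfolding visc_subsolution_def by blast
  qed
  define v where "v = x0 - p"
  define s where "s = v \<bullet> v"
  have nv: "norm v = dist p x0" unfolding v_def by (simp add: dist_norm norm_minus_commute)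
  have ss: "s = (dist p x0)^2" unfolding s_def v_def using inn by simp
  have s_lo: "\<rho>^2 / 4 \<le> s"
  proof -
    have "(\<rho>/2)^2 \<le> (dist p x0)^2" using dx0 rho by (intro power_mono) auto
    then show ?thesis unfolding ss by (simp add: power_divide)
  qed
  define A where "A = \<sigma> * k * exp (- k * s)"
  have Apos: "0 < A" unfolding A_def using sig kpos by simp
  have G1: "g1exp \<sigma> k s = A" unfolding g1exp_def A_def by simp
  have G2: "g2exp \<sigma> k s = - k * A" unfolding g2exp_def A_def by (simp add: power2_eq_square)
  have P: "- 2 * A * real CARD('n) * Lam - 4 * (- k * A) * lam * s \<le> pucci_minus lam Lam (D2\<phi> x0)"
    unfolding D2\<phi>_def v_def[symmetric] s_def[symmetric] G1 G2
    by (rule pucci_bound_exp[OF lam s_def]) (use Apos kpos in auto)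
  have H: "- 2 * A * (K0 * \<rho>) \<le> c x0 \<alpha> * u x0 - b x0 \<alpha> \<bullet> D\<phi> x0" for \<alpha>
  proof -
    have cu: "0 \<le> c x0 \<alpha> * u x0" using cases cnn by auto
    have "norm x0 \<le> norm p + norm v" unfolding v_def using norm_triangle_sub[of x0 p] by simp
    then have "norm x0 \<le> R" unfolding R_def using nv dx0' by simp
    then have nb: "norm (b x0 \<alpha>) \<le> K0" using K0[of x0 \<alpha>] by simp
    have "b x0 \<alpha> \<bullet> v \<le> norm (b x0 \<alpha>) * norm v" by (rule norm_cauchy_schwarz)
    also have "\<dots> \<le> K0 * \<rho>" using nb nv dx0' K0nn by (intro mult_mono) auto
    finally have bv: "b x0 \<alpha> \<bullet> v \<le> K0 * \<rho>" .
    have "b x0 \<alpha> \<bullet> D\<phi> x0 = 2 * A * (b x0 \<alpha> \<bullet> v)"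
      unfolding D\<phi>_def v_def[symmetric] s_def[symmetric] G1 by simp
    also have "\<dots> \<le> 2 * A * (K0 * \<rho>)" using bv Apos by simp
    finally show ?thesis using cu by linarith
  qed
  have "- 2 * A * real CARD('n) * Lam - 4 * (- k * A) * lam * s + - 2 * A * (K0 * \<rho>)
      \<le> pucci_minus lam Lam (D2\<phi> x0) + (INF \<alpha>. c x0 \<alpha> * u x0 - b x0 \<alpha> \<bullet> D\<phi> x0)"
    by (rule F_lb[where c=c and b=b and x=x0 and t="u x0" and p="D\<phi> x0", OF lam P H])
  moreover have "2 * A \<le> - 2 * A * real CARD('n) * Lam - 4 * (- k * A) * lam * s + - 2 * A * (K0 * \<rho>)"
  proof -
    have "k * lam * \<rho>^2 \<le> 4 * (k * lam * s)"
      using s_lo kpos lam by (simp add: mult_left_mono)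
    then have "2 * (NL + K0 * \<rho> + 1) \<le> 4 * (k * lam * s)" using krho by simp
    then have "A * (2 * (NL + K0 * \<rho> + 1)) \<le> A * (4 * (k * lam * s))" using Apos by (intro mult_left_mono) auto
    then show ?thesis unfolding NL_def by (simp add: algebra_simps)
  qed
  ultimately show False using test Apos by linarith
qed

lemma partA:
  fixes u :: "real^'n \<Rightarrow> real" and b :: "real^'n \<Rightarrow> 'a \<Rightarrow> real^'n" and c :: "real^'n \<Rightarrow> 'a \<Rightarrow> real"
  assumes lam: "0 < lam" "lam \<le> Lam"
    and bounds: "\<forall>R>0. \<exists>K. (\<forall>x \<alpha>. norm x \<le> R \<longrightarrow> norm (b x \<alpha>) + \<bar>c x \<alpha>\<bar> \<le> K) \<and>
                     (\<forall>x y \<alpha>. norm x \<le> R \<and> norm y \<le> R \<longrightarrow>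
                          norm (b x \<alpha> - b y \<alpha>) \<le> K * norm (x - y))"
    and c_nonneg: "\<forall>x \<alpha>. 0 \<le> c x \<alpha>"
    and growth: "\<exists>Ro>0. \<forall>x. norm x \<ge> Ro \<longrightarrow>
                   (SUP \<alpha>. b x \<alpha> \<bullet> x - c x \<alpha> * (norm x)\<^sup>2 * ln (norm x))
                     \<le> lam - (real CARD('n) - 1) * Lam"
    and sub: "visc_subsolution (\<lambda>x t p X. pucci_minus lam Lam X + (INF \<alpha>. c x \<alpha> * t - b x \<alpha> \<bullet> p)) u"
    and ls: "Limsup at_infinity (\<lambda>x. ereal (u x / ln (norm x))) \<le> 0"
    and cases: "(\<forall>x \<alpha>. c x \<alpha> = 0) \<or> (\<forall>x. 0 \<le> u x)"
  shows "\<exists>k. \<forall>x. u x = k"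
proof -
  obtain Ro where Ro: "0 < Ro" "\<And>x. norm x \<ge> Ro \<Longrightarrow>
      (SUP \<alpha>. b x \<alpha> \<bullet> x - c x \<alpha> * (norm x)\<^sup>2 * ln (norm x)) \<le> lam - (real CARD('n) - 1) * Lam"
    using growth by blast
  define r0 where "r0 = max Ro 2"
  have gr: "b x \<alpha> \<bullet> x \<le> (lam - (real CARD('n) - 1) * Lam) + c x \<alpha> * (norm x)^2 * ln (norm x)"
    if xr: "norm x \<ge> r0" for x \<alpha>
  proof -
    define n where "n = norm x"
    have npos: "0 < n" using xr Ro(1) unfolding r0_def n_def by linarith
    obtain K where K: "\<forall>y \<beta>. norm y \<le> n \<longrightarrow> norm (b y \<beta>) + \<bar>c y \<beta>\<bar> \<le> K"
      using bounds npos by blast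
    have bd: "b x \<beta> \<bullet> x - c x \<beta> * (norm x)\<^sup>2 * ln (norm x) \<le> K * n + K * n^2 * \<bar>ln n\<bar>" for \<beta>
    proof -
      have "norm (b x \<beta>) + \<bar>c x \<beta>\<bar> \<le> K" using K unfolding n_def by blast
      then have kb: "norm (b x \<beta>) \<le> K" "\<bar>c x \<beta>\<bar> \<le> K"
        using norm_ge_zero[of "b x \<beta>"] abs_ge_zero[of "c x \<beta>"] by linarith+
      have "b x \<beta> \<bullet> x \<le> norm (b x \<beta>) * n" unfolding n_def by (rule norm_cauchy_schwarz)
      also have "\<dots> \<le> K * n" using kb npos by (intro mult_right_mono) auto
      finally have 1: "b x \<beta> \<bullet> x \<le> K * n" .
      have "- (c x \<beta> * n^2 * ln n) \<le> \<bar>c x \<beta> * n^2 * ln n\<bar>" by simp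
      also have "\<dots> = \<bar>c x \<beta>\<bar> * n^2 * \<bar>ln n\<bar>" by (simp add: abs_mult)
      also have "\<dots> \<le> K * n^2 * \<bar>ln n\<bar>" using kb by (intro mult_right_mono) auto
      finally show ?thesis using 1 unfolding n_def by simp
    qed
    have bdd: "bdd_above (range (\<lambda>\<beta>. b x \<beta> \<bullet> x - c x \<beta> * (norm x)\<^sup>2 * ln (norm x)))"
      using bd by (intro bdd_aboveI2) auto
    have "b x \<alpha> \<bullet> x - c x \<alpha> * (norm x)\<^sup>2 * ln (norm x) \<le> (SUP \<alpha>. b x \<alpha> \<bullet> x - c x \<alpha> * (norm x)\<^sup>2 * ln (norm x))"
      by (rule cSUP_upper[OF _ bdd]) simp
    also have "\<dots> \<le> lam - (real CARD('n) - 1) * Lam" using Ro(2) xr unfolding r0_def by simp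
    finally show ?thesis by simp
  qed
  have lim: "\<exists>R. \<forall>x. norm x \<ge> R \<longrightarrow> u x \<le> \<epsilon> * ln (norm x)" if ep: "\<epsilon> > 0" for \<epsilon>
  proof -
    have "Limsup at_infinity (\<lambda>x. ereal (u x / ln (norm x))) < ereal \<epsilon>" using ls ep
      by (meson ereal_less(2) le_less_trans zero_less_iff_neq_zero)
    then have "eventually (\<lambda>x. ereal (u x / ln (norm x)) < ereal \<epsilon>) at_infinity"
      by (rule Limsup_lessD)
    then obtain R where R: "\<And>x. R \<le> norm x \<Longrightarrow> u x / ln (norm x) < \<epsilon>"
      unfolding eventually_at_infinity by auto
    show ?thesis
    proof (intro exI allI impI)
      fix x :: "real^'n" assume "max R 2 \<le> norm x"
      then have "R \<le> norm x" "2 \<le> norm x" by auto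
      then have "0 < ln (norm x)" by (intro ln_gt_zero) simp
      then show "u x \<le> \<epsilon> * ln (norm x)" using R[OF \<open>R \<le> norm x\<close>]
        by (simp add: pos_divide_less_eq mult.commute)
    qed
  qed
  have cc: "compact (cball (0::real^'n) r0)" by simp
  have cne: "cball (0::real^'n) r0 \<noteq> {}" unfolding r0_def by simp
  have uscu: "usc u" using sub unfolding visc_subsolution_def by simp
  obtain z where z: "z \<in> cball 0 r0" "\<And>y. y \<in> cball 0 r0 \<Longrightarrow> u y \<le> u z"
    using usc_max[OF uscu cc cne] by blast
  have all: "u x \<le> u z" for x
    by (rule exterior[OF lam sub lim gr _ cases, of r0 "u z" x])
       (use c_nonneg z r0_def in auto)
  have "u y = u z" for y
    by (rule smp[OF lam sub bounds _ cases all]) (use c_nonneg in auto)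
  then show ?thesis by blast
qed

lemma Sup_neg_real: "Sup ((\<lambda>x. - f x) ` S) = - Inf (f ` S :: real set)"
  by (simp add: Inf_real_def image_image)

lemma trace_neg: "trace ((M::real^'n^'n) ** (- X)) = - trace (M ** X)"
  by (simp add: trace_def matrix_matrix_mult_def sum_negf)

lemma pucci_plus_neg: "pucci_plus lam Lam (- X) = - pucci_minus lam Lam X"
proof -
  have "pucci_plus lam Lam (- X) = (SUP M\<in>pucci_set lam Lam. - (- trace (M ** X)))"
    unfolding pucci_plus_def by (simp add: trace_neg)
  also have "\<dots> = - pucci_minus lam Lam X" unfolding pucci_minus_def by (rule Sup_neg_real)
  finally show ?thesis .
qed

lemma neg_mv: "(- A) *v h = - (A *v (h::real^'n))" for A :: "real^'n^'m"
  by (simp add: vec_eq_iff matrix_vector_mult_def sum_negf)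

lemma C2_neg: "C2_with phi Dphi D2phi \<Longrightarrow> C2_with (\<lambda>x. - phi x) (\<lambda>x. - Dphi x) (\<lambda>x. - D2phi x)"
  unfolding C2_with_def
proof (intro conjI allI, goal_cases)
  case (1 x)
  then have "((\<lambda>x. - phi x) has_derivative (\<lambda>h. - (Dphi x \<bullet> h))) (at x)"
    by (intro has_derivative_minus) auto
  then show ?case by (rule has_derivative_eq_rhs) (simp add: fun_eq_iff)
next
  case (2 x)
  then have "((\<lambda>x. - Dphi x) has_derivative (\<lambda>h. - (D2phi x *v h))) (at x)"
    by (intro has_derivative_minus) auto
  then show ?case by (rule has_derivative_eq_rhs) (simp add: fun_eq_iff neg_mv)
next
  case 3
  then show ?case by (intro continuous_intros) auto
qed

theorem corollary2p7_aux:
  fixes lam Lam :: real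
    and b :: "real^'n \<Rightarrow> 'a::metric_space \<Rightarrow> real^'n"
    and c :: "real^'n \<Rightarrow> 'a \<Rightarrow> real"
  assumes lam_pos: "0 < lam" and lam_le: "lam \<le> Lam"
    and bounds: "\<forall>R>0. \<exists>K. (\<forall>x \<alpha>. norm x \<le> R \<longrightarrow> norm (b x \<alpha>) + \<bar>c x \<alpha>\<bar> \<le> K) \<and>
                     (\<forall>x y \<alpha>. norm x \<le> R \<and> norm y \<le> R \<longrightarrow>
                          norm (b x \<alpha> - b y \<alpha>) \<le> K * norm (x - y))"
    and c_nonneg: "\<forall>x \<alpha>. 0 \<le> c x \<alpha>"
    and growth: "\<exists>Ro>0. \<forall>x. norm x \<ge> Ro \<longrightarrow>
                   (SUP \<alpha>. b x \<alpha> \<bullet> x - c x \<alpha> * (norm x)\<^sup>2 * ln (norm x))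
                     \<le> lam - (real CARD('n) - 1) * Lam"
  shows
    "(\<forall>u :: real^'n \<Rightarrow> real.
        visc_subsolution
          (\<lambda>x t p X. pucci_minus lam Lam X + (INF \<alpha>. c x \<alpha> * t - b x \<alpha> \<bullet> p)) u \<and>
        Limsup at_infinity (\<lambda>x. ereal (u x / ln (norm x))) \<le> 0 \<and>
        ((\<forall>x \<alpha>. c x \<alpha> = 0) \<or> (\<forall>x. 0 \<le> u x))
        \<longrightarrow> (\<exists>k. \<forall>x. u x = k))
   \<and> (\<forall>v :: real^'n \<Rightarrow> real.
        visc_supersolution
          (\<lambda>x t p X. pucci_plus lam Lam X + (SUP \<alpha>. c x \<alpha> * t - b x \<alpha> \<bullet> p)) v \<and>
        Liminf at_infinity (\<lambda>x. ereal (v x / ln (norm x))) \<ge> 0 \<and>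
        ((\<forall>x \<alpha>. c x \<alpha> = 0) \<or> (\<forall>x. v x \<le> 0))
        \<longrightarrow> (\<exists>k. \<forall>x. v x = k))"
proof (intro conjI allI impI)
  fix u :: "real^'n \<Rightarrow> real"
  assume h: "visc_subsolution
          (\<lambda>x t p X. pucci_minus lam Lam X + (INF \<alpha>. c x \<alpha> * t - b x \<alpha> \<bullet> p)) u \<and>
        Limsup at_infinity (\<lambda>x. ereal (u x / ln (norm x))) \<le> 0 \<and>
        ((\<forall>x \<alpha>. c x \<alpha> = 0) \<or> (\<forall>x. 0 \<le> u x))"
  show "\<exists>k. \<forall>x. u x = k"
    by (rule partA[OF lam_pos lam_le bounds c_nonneg growth]) (use h in auto)
next
  fix v :: "real^'n \<Rightarrow> real"
  assume h: "visc_supersolution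
          (\<lambda>x t p X. pucci_plus lam Lam X + (SUP \<alpha>. c x \<alpha> * t - b x \<alpha> \<bullet> p)) v \<and>
        Liminf at_infinity (\<lambda>x. ereal (v x / ln (norm x))) \<ge> 0 \<and>
        ((\<forall>x \<alpha>. c x \<alpha> = 0) \<or> (\<forall>x. v x \<le> 0))"
  define u where "u x = - v x" for x
  have Fid: "pucci_plus lam Lam (- X) + (SUP \<alpha>. c x \<alpha> * t - b x \<alpha> \<bullet> (- p))
      = - (pucci_minus lam Lam X + (INF \<alpha>. c x \<alpha> * (- t) - b x \<alpha> \<bullet> p))" for x t p X
  proof -
    have "(SUP \<alpha>. c x \<alpha> * t - b x \<alpha> \<bullet> (- p)) = (SUP \<alpha>. - (c x \<alpha> * (- t) - b x \<alpha> \<bullet> p))"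
      by (rule SUP_cong) (simp_all add: algebra_simps)
    also have "\<dots> = - (INF \<alpha>. c x \<alpha> * (- t) - b x \<alpha> \<bullet> p)" by (rule Sup_neg_real)
    finally show ?thesis using pucci_plus_neg[of lam Lam X] by (simp add: add.commute)
  qed
  have sub: "visc_subsolution (\<lambda>x t p X. pucci_minus lam Lam X + (INF \<alpha>. c x \<alpha> * t - b x \<alpha> \<bullet> p)) u"
    unfolding visc_subsolution_def
  proof (intro conjI allI impI)
    have "lsc v" using h unfolding visc_supersolution_def by simp
    then show "usc u" unfolding usc_def lsc_def u_def
    proof (intro allI)
      fix a assume "\<forall>a. open {x. a < v x}"
      then have "open {x. - a < v x}" by blast
      moreover have "{x. - v x < a} = {x. - a < v x}" by auto
      ultimately show "open {x. - v x < a}" by simp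
    qed
  next
    fix phi Dphi D2phi x0
    assume a: "C2_with phi Dphi D2phi \<and> (\<exists>r>0. \<forall>y\<in>ball x0 r. u y - phi y \<le> u x0 - phi x0)"
    have C2n: "C2_with (\<lambda>x. - phi x) (\<lambda>x. - Dphi x) (\<lambda>x. - D2phi x)" using a C2_neg by blast
    have "\<exists>r>0. \<forall>y\<in>ball x0 r. v y - (- phi y) \<ge> v x0 - (- phi x0)"
      using a unfolding u_def by fastforce
    then have "pucci_plus lam Lam (- D2phi x0) + (SUP \<alpha>. c x0 \<alpha> * v x0 - b x0 \<alpha> \<bullet> (- Dphi x0)) \<ge> 0"
      using h C2n unfolding visc_supersolution_def by blast
    then show "pucci_minus lam Lam (D2phi x0) + (INF \<alpha>. c x0 \<alpha> * u x0 - b x0 \<alpha> \<bullet> Dphi x0) \<le> 0"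
      unfolding Fid u_def by simp
  qed
  have ls: "Limsup at_infinity (\<lambda>x. ereal (u x / ln (norm x))) \<le> 0"
  proof -
    have "Limsup at_infinity (\<lambda>x. ereal (u x / ln (norm x)))
        = Limsup at_infinity (\<lambda>x. - ereal (v x / ln (norm x)))" unfolding u_def by simp
    also have "\<dots> = - Liminf at_infinity (\<lambda>x. ereal (v x / ln (norm x)))" by (rule ereal_Limsup_uminus)
    also have "\<dots> \<le> 0" using h by simp
    finally show ?thesis .
  qed
  have cs: "(\<forall>x \<alpha>. c x \<alpha> = 0) \<or> (\<forall>x. 0 \<le> u x)" using h unfolding u_def by auto
  obtain k where "\<forall>x. u x = k"
    using partA[OF lam_pos lam_le bounds c_nonneg growth sub ls cs] by blast
  then show "\<exists>k. \<forall>x. v x = k" unfolding u_def by (metis minus_minus)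
qed

theorem corollary2p7:
  fixes lam Lam :: real
    and b :: "real^'n \<Rightarrow> 'a::metric_space \<Rightarrow> real^'n"
    and c :: "real^'n \<Rightarrow> 'a \<Rightarrow> real"
  assumes lam_pos: "0 < lam" and lam_le: "lam \<le> Lam"
    and b_cont: "continuous_on UNIV (\<lambda>(x, \<alpha>). b x \<alpha>)"
    and c_cont: "continuous_on UNIV (\<lambda>(x, \<alpha>). c x \<alpha>)"
    and bounds: "\<forall>R>0. \<exists>K. (\<forall>x \<alpha>. norm x \<le> R \<longrightarrow> norm (b x \<alpha>) + \<bar>c x \<alpha>\<bar> \<le> K) \<and>
                     (\<forall>x y \<alpha>. norm x \<le> R \<and> norm y \<le> R \<longrightarrow>
                          norm (b x \<alpha> - b y \<alpha>) \<le> K * norm (x - y))"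
    and c_nonneg: "\<forall>x \<alpha>. 0 \<le> c x \<alpha>"
    and c_unif: "\<forall>R>0. \<forall>\<epsilon>>0. \<exists>\<delta>>0. \<forall>x y \<alpha>. norm x \<le> R \<and> norm y \<le> R \<and> dist x y < \<delta> \<longrightarrow>
                     \<bar>c x \<alpha> - c y \<alpha>\<bar> < \<epsilon>"
    and growth: "\<exists>Ro>0. \<forall>x. norm x \<ge> Ro \<longrightarrow>
                   (SUP \<alpha>. b x \<alpha> \<bullet> x - c x \<alpha> * (norm x)\<^sup>2 * ln (norm x))
                     \<le> lam - (real CARD('n) - 1) * Lam"
  shows
    "(\<forall>u :: real^'n \<Rightarrow> real.
        visc_subsolution
          (\<lambda>x t p X. pucci_minus lam Lam X + (INF \<alpha>. c x \<alpha> * t - b x \<alpha> \<bullet> p)) u \<and>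
        Limsup at_infinity (\<lambda>x. ereal (u x / ln (norm x))) \<le> 0 \<and>
        ((\<forall>x \<alpha>. c x \<alpha> = 0) \<or> (\<forall>x. 0 \<le> u x))
        \<longrightarrow> (\<exists>k. \<forall>x. u x = k))
   \<and> (\<forall>v :: real^'n \<Rightarrow> real.
        visc_supersolution
          (\<lambda>x t p X. pucci_plus lam Lam X + (SUP \<alpha>. c x \<alpha> * t - b x \<alpha> \<bullet> p)) v \<and>
        Liminf at_infinity (\<lambda>x. ereal (v x / ln (norm x))) \<ge> 0 \<and>
        ((\<forall>x \<alpha>. c x \<alpha> = 0) \<or> (\<forall>x. v x \<le> 0))
        \<longrightarrow> (\<exists>k. \<forall>x. v x = k))"
    using corollary2p7_aux[OF lam_pos lam_le bounds c_nonneg growth] .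

end
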